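(* Let $G$ and $H$ be finite abelian groups, written additively, of the same even order $k>2$, let $f:G\to H$ be semi-planar, and suppose $S(G,H;f)$ splits into two substructures $S_1$ and $S_2$ with $\mathcal{L}(0,0)\in S_1$. For $i=1,2$ let $P_0^i=\{b\in H : \mathcal{L}(0,b)\in S_i\}$. Then $P_0^1$ is a subgroup of $H$ of index $2$, and $P_0^2$ is its (non-trivial) coset $H\setminus P_0^1$.
   Context: A function $f:G\to H$ is semi-planar if for every non-identity $a\in G$ and every $y\in H$, the equation $f(x+a)-f(x)=y$ has either $0$ or $2$ solutions $x\in G$. The incidence structure $S(G,H;f)$ has points $(x,y)\in G\times H$ and lines $\mathcal{L}(a,b)$ for $(a,b)\in G\times H$, with $(x,y)$ incident with $\mathcal{L}(a,b)$ iff $y=f(x-a)+b$. Its incidence graph is the bipartite graph on points and lines with an edge for each incident pair. $S(G,H;f)$ splits into two substructures $S_1,S_2$ if its incidence graph has exactly two connected components; $S_1,S_2$ are the incidence structures formed by the points and lines of the two components, and $\mathcal{L}(a,b)\in S_i$ means the line lies in component $S_i$. *)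

theory Defs
  imports Main
begin

definition semi_planar :: "('g::{ab_group_add,finite} \<Rightarrow> 'h::ab_group_add) \<Rightarrow> bool" where
  "semi_planar f \<longleftrightarrow>
     (\<forall>a y. a \<noteq> 0 \<longrightarrow> card {x. f (x + a) - f x = y} \<in> {0, 2})"

definition incident :: "('g::ab_group_add \<Rightarrow> 'h::ab_group_add) \<Rightarrow> 'g \<times> 'h \<Rightarrow> 'g \<times> 'h \<Rightarrow> bool" where
  "incident f p l \<longleftrightarrow> snd p = f (fst p - fst l) + snd l"

definition inc_edge :: "('g::ab_group_add \<Rightarrow> 'h::ab_group_add) \<Rightarrow>
    ('g \<times> 'h) + ('g \<times> 'h) \<Rightarrow> ('g \<times> 'h) + ('g \<times> 'h) \<Rightarrow> bool" where
  "inc_edge f u v \<longleftrightarrow>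
     (\<exists>p l. (u = Inl p \<and> v = Inr l \<or> u = Inr l \<and> v = Inl p) \<and> incident f p l)"

definition inc_components :: "('g::ab_group_add \<Rightarrow> 'h::ab_group_add) \<Rightarrow>
    (('g \<times> 'h) + ('g \<times> 'h)) set set" where
  "inc_components f = UNIV // {(u, v). (inc_edge f)\<^sup>*\<^sup>* u v}"

text \<open>S(G,H;f) splits into two substructures: incidence graph has exactly two components.\<close>
definition splits_in_two :: "('g::ab_group_add \<Rightarrow> 'h::ab_group_add) \<Rightarrow> bool" where
  "splits_in_two f \<longleftrightarrow> card (inc_components f) = 2"

definition add_subgroup :: "'h::ab_group_add set \<Rightarrow> bool" where
  "add_subgroup P \<longleftrightarrow> 0 \<in> P \<and> (\<forall>x\<in>P. \<forall>y\<in>P. x + y \<in> P) \<and> (\<forall>x\<in>P. - x \<in> P)"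

end

theory Submission
  imports Defs
begin

definition trv :: "'g::ab_group_add \<Rightarrow> 'h::ab_group_add \<Rightarrow> ('g \<times> 'h) + ('g \<times> 'h) \<Rightarrow> ('g \<times> 'h) + ('g \<times> 'h)" where
  "trv c d = map_sum (\<lambda>(x,y). (x+c,y+d)) (\<lambda>(x,y). (x+c,y+d))"

lemma trv_Inr[simp]: "trv c d (Inr (a,b)) = Inr (a+c,b+d)"
  by (simp add: trv_def)

lemma edge_trv: "inc_edge f u v \<Longrightarrow> inc_edge f (trv c d u) (trv c d v)"
proof -
  assume "inc_edge f u v"
  then obtain x y a b where h: "(u = Inl (x,y) \<and> v = Inr (a,b) \<or> u = Inr (a,b) \<and> v = Inl (x,y))"
    "y = f (x - a) + b"
    unfolding inc_edge_def incident_def by force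
  have "y + d = f ((x + c) - (a + c)) + (b + d)" using h(2) by (simp add: algebra_simps)
  then show ?thesis using h(1) unfolding inc_edge_def incident_def trv_def by force
qed

lemma R_trv: "(inc_edge f)\<^sup>*\<^sup>* u v \<Longrightarrow> (inc_edge f)\<^sup>*\<^sup>* (trv c d u) (trv c d v)"
proof (induction rule: rtranclp_induct)
  case base then show ?case by simp
next
  case (step y z) then show ?case using edge_trv[of f y z c d]
    by (meson rtranclp.rtrancl_into_rtrancl)
qed

lemma edge_sym: "inc_edge f u v \<Longrightarrow> inc_edge f v u"
  unfolding inc_edge_def by blast

lemma R_sym: "(inc_edge f)\<^sup>*\<^sup>* u v \<Longrightarrow> (inc_edge f)\<^sup>*\<^sup>* v u"
proof (induction rule: rtranclp_induct)
  case base then show ?case by simp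
next
  case (step y z) then show ?case using edge_sym[of f y z]
    by (meson converse_rtranclp_into_rtranclp)
qed

theorem theorem2:
  fixes f :: "'g::{ab_group_add,finite} \<Rightarrow> 'h::{ab_group_add,finite}"
    and S1 S2 :: "(('g \<times> 'h) + ('g \<times> 'h)) set"
  assumes same_order: "card (UNIV :: 'g set) = card (UNIV :: 'h set)"
    and even_order: "even (card (UNIV :: 'g set))"
    and order_gt2: "card (UNIV :: 'g set) > 2"
    and sp: "semi_planar f"
    and split: "splits_in_two f"
    and comps: "inc_components f = {S1, S2}" "S1 \<noteq> S2"
    and L00: "Inr (0, 0) \<in> S1"
  shows "add_subgroup {b. Inr (0, b) \<in> S1}
    \<and> card (UNIV :: 'h set) = 2 * card {b. Inr (0, b) \<in> S1}
    \<and> {b. Inr (0, b) \<in> S2} = UNIV - {b. Inr (0, b) \<in> S1}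
    \<and> (\<exists>h. {b. Inr (0, b) \<in> S2} = (\<lambda>x. h + x) ` {b. Inr (0, b) \<in> S1})"
proof -
  define R where "R = (inc_edge f)\<^sup>*\<^sup>*"
  define E where "E = {(u, v). R u v}"
  define Z0 where "Z0 = (Inr (0,0) :: ('g \<times> 'h) + ('g \<times> 'h))"
  have Rtr: "R u v \<Longrightarrow> R (trv c d u) (trv c d v)" for u v c d
    unfolding R_def by (rule R_trv)
  have Rsym: "R u v \<Longrightarrow> R v u" for u v unfolding R_def by (rule R_sym)
  have Rtrans: "R u v \<Longrightarrow> R v w \<Longrightarrow> R u w" for u v w unfolding R_def by simp
  have Rrefl: "R u u" for u unfolding R_def by simp
  have EE: "E `` {u} = {v. R u v}" for u unfolding E_def by auto
  have S1in: "S1 \<in> UNIV // E" and S2in: "S2 \<in> UNIV // E"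
    using comps(1) unfolding inc_components_def E_def R_def by auto
  obtain u1 where u1: "S1 = {v. R u1 v}" using S1in EE by (auto elim: quotientE)
  obtain u2 where u2: "S2 = {v. R u2 v}" using S2in EE by (auto elim: quotientE)
  have S1c: "v \<in> S1 \<longleftrightarrow> R Z0 v" for v
    using L00 u1 Rsym Rtrans unfolding Z0_def by blast
  have S2c: "v \<in> S2 \<longleftrightarrow> R u2 v" for v using u2 by simp
  have nO2: "\<not> R Z0 u2"
  proof
    assume "R Z0 u2"
    then have "S1 = S2" using S1c S2c Rsym Rtrans by blast
    with comps(2) show False by simp
  qed
  have cover: "R Z0 v \<or> R u2 v" for v
  proof -
    have "E `` {v} \<in> UNIV // E" by (rule quotientI) simp
    then have "E `` {v} = S1 \<or> E `` {v} = S2"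
      using comps(1) unfolding inc_components_def E_def R_def by auto
    moreover have "v \<in> E `` {v}" using EE Rrefl by auto
    ultimately show ?thesis using S1c S2c by blast
  qed
  have excl: "\<not> (R Z0 v \<and> R u2 v)" for v using nO2 Rsym Rtrans by blast
  define P where "P = {b. Inr (0, b) \<in> S1}"
  have Pc: "b \<in> P \<longleftrightarrow> R Z0 (Inr (0,b))" for b unfolding P_def using S1c by simp
  have sub: "add_subgroup P"
    unfolding add_subgroup_def
  proof (intro conjI ballI)
    show "0 \<in> P" using Pc Rrefl Z0_def by simp
  next
    fix x y assume "x \<in> P" "y \<in> P"
    then have a: "R Z0 (Inr (0,x))" and b: "R Z0 (Inr (0,y))" using Pc by auto
    from Rtr[OF b, of 0 x] have "R (Inr (0,x)) (Inr (0, y + x))" by (simp add: Z0_def)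
    with a show "x + y \<in> P" using Pc Rtrans by (simp add: add.commute)
  next
    fix x assume "x \<in> P"
    then have a: "R Z0 (Inr (0,x))" using Pc by auto
    from Rtr[OF a, of 0 "-x"] have "R (Inr (0,-x)) Z0" by (simp add: Z0_def)
    then show "- x \<in> P" using Pc Rsym by blast
  qed
  have S2P: "{b. Inr (0, b) \<in> S2} = UNIV - P"
    using cover excl S2c Pc by blast
  have notall: "P \<noteq> UNIV"
  proof
    assume all: "P = UNIV"
    have "R Z0 v" for v
    proof (cases v)
      case (Inl p)
      obtain x y where p: "p = (x,y)" by force
      have "R Z0 (Inr (0, y - f x))" using all Pc by blast
      moreover have "inc_edge f (Inr (0, y - f x)) v"
        unfolding inc_edge_def incident_def Inl p by auto
      ultimately show ?thesis unfolding R_def by (meson rtranclp.rtrancl_into_rtrancl)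
    next
      case (Inr l)
      obtain a b where l: "l = (a,b)" by force
      have "R Z0 (Inr (0, f 0 + b - f a))" using all Pc by blast
      moreover have "inc_edge f (Inr (0, f 0 + b - f a)) (Inl (a, f 0 + b))"
        unfolding inc_edge_def incident_def by auto
      moreover have "inc_edge f (Inl (a, f 0 + b)) v"
        unfolding inc_edge_def incident_def Inr l by auto
      ultimately show ?thesis unfolding R_def by (meson rtranclp.rtrancl_into_rtrancl)
    qed
    then show False using excl Rrefl by blast
  qed
  then obtain h where h: "h \<notin> P" by blast
  have coset: "UNIV - P = (\<lambda>x. h + x) ` P"
  proof (intro set_eqI iffI)
    fix b assume "b \<in> UNIV - P"
    then have b1: "R u2 (Inr (0,b))" and h1: "R u2 (Inr (0,h))" using cover Pc h by auto
    have "R (Inr (0,h)) (Inr (0,b))" using b1 h1 Rsym Rtrans by blast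
    from Rtr[OF this, of 0 "-h"] have "b - h \<in> P" using Pc by (simp add: Z0_def)
    then show "b \<in> (\<lambda>x. h + x) ` P" by (intro image_eqI[of _ _ "b - h"]) auto
  next
    fix b assume "b \<in> (\<lambda>x. h + x) ` P"
    then obtain p where p: "p \<in> P" "b = h + p" by auto
    have "b \<notin> P"
    proof
      assume "b \<in> P"
      then have "b + - p \<in> P" using sub p unfolding add_subgroup_def by blast
      with h p show False by simp
    qed
    then show "b \<in> UNIV - P" by simp
  qed
  have "card (UNIV :: 'h set) = card (P \<union> (UNIV - P))" by (simp add: Un_Diff_cancel)
  also have "\<dots> = card P + card (UNIV - P)" by (rule card_Un_disjoint) auto
  also have "card (UNIV - P) = card P" unfolding coset
    by (rule card_image) (simp add: inj_on_def)
  finally have "card (UNIV :: 'h set) = 2 * card P" by simp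
  then show ?thesis using sub S2P coset unfolding P_def by auto
qed

end
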